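(* Let $p(z)=\sum_{i=0}^da_iz^i$ be a complex polynomial of degree $d\ge2$ such that $0$ is a periodic point of period $m_0$ with multiplier $\rho:=(p^{m_0})'(0)$, let $t_0\ge1$, $m_1:=m_0t_0$ and $b_i:=(p^{m_1-i-1})'(p^{i+1}(0))$ for $0\le i\le m_1-1$. Let $q$ be a polynomial, $\epsilon\in\mathbb{C}^*$, and for $s\in\mathbb{D}^*$ let $f(z,w):=(p(z)+s\epsilon w,q(w))$ and $g:=\phi^{-1}\circ f\circ\phi$ with $\phi(z,w)=(sz,w)$. Then for every $l\ge1$ there exists a polynomial $E_l$ in $(s,z,w)$ such that $$g^{m_1l}(z,w)=\Big(\rho^{t_0l}z+\epsilon\sum_{i=0}^{m_1-1}b_i\sum_{k=0}^{l-1}\rho^{t_0k}q^{i+(l-1-k)m_1}(w)+sE_l(s,z,w),\ q^{m_1l}(w)\Big).$$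
   Context: $\mathbb{D}^*$ is the punctured unit disc. Note $g(z,w)=(a_0s^{-1}+a_1z+\epsilon w+sE(s,z,w),q(w))$ with $E$ polynomial. *)

theory Defs
  imports "HOL-Analysis.Analysis" "HOL-Computational_Algebra.Polynomial"
begin

definition poly3 :: "(complex \<Rightarrow> complex \<Rightarrow> complex \<Rightarrow> complex) \<Rightarrow> bool" where
  "poly3 E \<longleftrightarrow> (\<exists>(n::nat) (c::nat \<Rightarrow> nat \<Rightarrow> nat \<Rightarrow> complex).
     \<forall>s z w. E s z w = (\<Sum>i\<le>n. \<Sum>j\<le>n. \<Sum>k\<le>n. c i j k * s ^ i * z ^ j * w ^ k))"

definition fmap :: "complex poly \<Rightarrow> complex poly \<Rightarrow> complex \<Rightarrow> complex \<Rightarrow> complex \<times> complex \<Rightarrow> complex \<times> complex" where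
  "fmap p q eps s = (\<lambda>(z, w). (poly p z + s * eps * w, poly q w))"

definition phi :: "complex \<Rightarrow> complex \<times> complex \<Rightarrow> complex \<times> complex" where
  "phi s = (\<lambda>(z, w). (s * z, w))"

definition phi_inv :: "complex \<Rightarrow> complex \<times> complex \<Rightarrow> complex \<times> complex" where
  "phi_inv s = (\<lambda>(z, w). (z / s, w))"

definition gmap :: "complex poly \<Rightarrow> complex poly \<Rightarrow> complex \<Rightarrow> complex \<Rightarrow> complex \<times> complex \<Rightarrow> complex \<times> complex" where
  "gmap p q eps s = phi_inv s \<circ> fmap p q eps s \<circ> phi s"

end

theory Submission
  imports Defs
begin


definition mon :: "(nat \<times> nat \<times> nat \<times> complex) list \<Rightarrow> complex \<Rightarrow> complex \<Rightarrow> complex \<Rightarrow> complex" where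
  "mon L s z w = (\<Sum>(i,j,k,c)\<leftarrow>L. c * s ^ i * z ^ j * w ^ k)"

definition M :: "(complex \<Rightarrow> complex \<Rightarrow> complex \<Rightarrow> complex) \<Rightarrow> bool" where
  "M E \<longleftrightarrow> (\<exists>L. \<forall>s z w. E s z w = mon L s z w)"

lemma mon_Nil[simp]: "mon [] s z w = 0" by (simp add: mon_def)
lemma mon_Cons[simp]: "mon ((i,j,k,c)#L) s z w = c * s ^ i * z ^ j * w ^ k + mon L s z w"
  by (simp add: mon_def)
lemma mon_append: "mon (L1 @ L2) s z w = mon L1 s z w + mon L2 s z w"
  by (simp add: mon_def)

definition comb :: "nat \<times> nat \<times> nat \<times> complex \<Rightarrow> nat \<times> nat \<times> nat \<times> complex \<Rightarrow> nat \<times> nat \<times> nat \<times> complex" where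
  "comb = (\<lambda>(i,j,k,c) (i',j',k',c'). (i+i', j+j', k+k', c*c'))"

lemma mon_map_comb: "mon (map (comb (i,j,k,c)) L) s z w = c * s ^ i * z ^ j * w ^ k * mon L s z w"
  by (induction L) (auto simp: comb_def power_add algebra_simps)

lemma mon_mult: "mon (concat (map (\<lambda>a. map (comb a) L2) L1)) s z w = mon L1 s z w * mon L2 s z w"
  by (induction L1) (auto simp: mon_append mon_map_comb algebra_simps)

lemma M_const: "M (\<lambda>s z w. c)"
  unfolding M_def by (rule exI[of _ "[(0,0,0,c)]"]) simp
lemma M_s: "M (\<lambda>s z w. s)"
  unfolding M_def by (rule exI[of _ "[(1,0,0,1)]"]) simp
lemma M_z: "M (\<lambda>s z w. z)"
  unfolding M_def by (rule exI[of _ "[(0,1,0,1)]"]) simp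
lemma M_w: "M (\<lambda>s z w. w)"
  unfolding M_def by (rule exI[of _ "[(0,0,1,1)]"]) simp
lemma M_add: "M E \<Longrightarrow> M F \<Longrightarrow> M (\<lambda>s z w. E s z w + F s z w)"
  unfolding M_def by (metis mon_append)
lemma M_mult: "M E \<Longrightarrow> M F \<Longrightarrow> M (\<lambda>s z w. E s z w * F s z w)"
  unfolding M_def by (metis mon_mult)
lemma M_poly: "M E \<Longrightarrow> M (\<lambda>s z w. poly r (E s z w))"
proof (induction r)
  case 0 then show ?case by (simp add: M_const)
next
  case (pCons a r)
  then show ?case by (simp add: M_add M_mult M_const)
qed

lemma poly3_single: 
  fixes c s z w :: complex
  assumes "a \<le> n" "b \<le> n" "d \<le> n"
  shows "(\<Sum>i\<le>n. \<Sum>j\<le>n. \<Sum>k\<le>n. (if i = a \<and> j = b \<and> k = d then c else 0) * s ^ i * z ^ j * w ^ k)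
     = c * s ^ a * z ^ b * w ^ d"
proof -
  have e1: "(\<Sum>k\<le>n. (if i = a \<and> j = b \<and> k = d then c else 0) * s ^ i * z ^ j * w ^ k)
     = (if i = a \<and> j = b then c * s ^ i * z ^ j * w ^ d else 0)" for i j
  proof (cases "i = a \<and> j = b")
    case True
    have "(\<Sum>k\<le>n. (if i = a \<and> j = b \<and> k = d then c else 0) * s ^ i * z ^ j * w ^ k)
      = (\<Sum>k\<le>n. if k = d then c * s ^ i * z ^ j * w ^ k else 0)"
      using True by (intro sum.cong) auto
    then show ?thesis using True assms by (simp add: sum.delta)
  next
    case False then show ?thesis by auto
  qed
  have e2: "(\<Sum>j\<le>n. (if i = a \<and> j = b then c * s ^ i * z ^ j * w ^ d else 0))
     = (if i = a then c * s ^ i * z ^ b * w ^ d else 0)" for i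
  proof (cases "i = a")
    case True
    have "(\<Sum>j\<le>n. (if i = a \<and> j = b then c * s ^ i * z ^ j * w ^ d else 0))
      = (\<Sum>j\<le>n. if j = b then c * s ^ i * z ^ j * w ^ d else 0)"
      using True by (intro sum.cong) auto
    then show ?thesis using True assms by (simp add: sum.delta)
  next
    case False then show ?thesis by auto
  qed
  show ?thesis unfolding e1 e2 using assms by (simp add: sum.delta)
qed

definition coef :: "(nat \<times> nat \<times> nat \<times> complex) list \<Rightarrow> nat \<Rightarrow> nat \<Rightarrow> nat \<Rightarrow> complex" where
  "coef L i j k = (\<Sum>(a,b,d,c)\<leftarrow>L. if i = a \<and> j = b \<and> k = d then c else 0)"

lemma mon_coef:
  assumes "\<forall>(a,b,d,c)\<in>set L. a \<le> n \<and> b \<le> n \<and> d \<le> n"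
  shows "mon L s z w = (\<Sum>i\<le>n. \<Sum>j\<le>n. \<Sum>k\<le>n. coef L i j k * s ^ i * z ^ j * w ^ k)"
  using assms
proof (induction L)
  case Nil then show ?case by (simp add: coef_def)
next
  case (Cons x L)
  obtain a b d c where x: "x = (a,b,d,c)" by (cases x) auto
  have "coef (x # L) i j k = (if i = a \<and> j = b \<and> k = d then c else 0) + coef L i j k" for i j k
    by (simp add: coef_def x)
  then have "(\<Sum>i\<le>n. \<Sum>j\<le>n. \<Sum>k\<le>n. coef (x#L) i j k * s ^ i * z ^ j * w ^ k)
    = (\<Sum>i\<le>n. \<Sum>j\<le>n. \<Sum>k\<le>n. (if i = a \<and> j = b \<and> k = d then c else 0) * s ^ i * z ^ j * w ^ k)
     + (\<Sum>i\<le>n. \<Sum>j\<le>n. \<Sum>k\<le>n. coef L i j k * s ^ i * z ^ j * w ^ k)"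
    by (simp add: distrib_right sum.distrib)
  also have "\<dots> = c * s ^ a * z ^ b * w ^ d + mon L s z w"
    using Cons by (subst poly3_single) (auto simp: x)
  finally show ?case by (simp add: x)
qed

lemma M_poly3: assumes "M E" shows "poly3 E"
proof -
  obtain L where L: "\<And>s z w. E s z w = mon L s z w" using assms M_def by auto
  define f where "f = (\<lambda>(a::nat,b::nat,d::nat,c::complex). a + b + d)"
  define n where "n = sum_list (map f L)"
  have bd: "\<forall>(a,b,d,c)\<in>set L. a \<le> n \<and> b \<le> n \<and> d \<le> n"
  proof (clarify)
    fix a b d c assume "(a,b,d,c) \<in> set L"
    then have "f (a,b,d,c) \<in> set (map f L)" by simp
    then have "f (a,b,d,c) \<le> n" unfolding n_def by (rule member_le_sum_list) auto
    then show "a \<le> n \<and> b \<le> n \<and> d \<le> n" by (simp add: f_def)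
  qed
  show ?thesis unfolding poly3_def
  proof (intro exI allI)
    fix s z w
    show "E s z w = (\<Sum>i\<le>n. \<Sum>j\<le>n. \<Sum>k\<le>n. coef L i j k * s ^ i * z ^ j * w ^ k)"
      using L mon_coef[OF bd] by simp
  qed
qed



lemma taylor1: "\<exists>r. \<forall>h. poly p (a + h) = poly p a + poly (pderiv p) a * h + h^2 * poly r h"
proof (induction p)
  case 0 then show ?case by (rule exI[of _ 0]) simp
next
  case (pCons c p)
  then obtain r where r: "\<And>h. poly p (a + h) = poly p a + poly (pderiv p) a * h + h^2 * poly r h" by auto
  have "poly (pCons c p) (a + h) = poly (pCons c p) a + poly (pderiv (pCons c p)) a * h
     + h^2 * poly ([:poly (pderiv p) a:] + [:a, 1:] * r) h" for h
  proof -
    have "poly (pCons c p) (a + h) = c + (a + h) * poly p (a + h)" by simp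
    also have "\<dots> = c + (a + h) * (poly p a + poly (pderiv p) a * h + h^2 * poly r h)" by (simp only: r)
    also have "\<dots> = poly (pCons c p) a + poly (pderiv (pCons c p)) a * h
     + h^2 * poly ([:poly (pderiv p) a:] + [:a, 1:] * r) h"
      by (simp add: pderiv_pCons power2_eq_square algebra_simps)
    finally show ?thesis .
  qed
  then show ?case by blast
qed

definition Dd :: "complex poly \<Rightarrow> nat \<Rightarrow> complex \<Rightarrow> complex" where
  "Dd p n x = (\<Prod>j<n. poly (pderiv p) ((poly p ^^ j) x))"

lemma Dd_Suc: "Dd p (Suc n) x = Dd p n x * poly (pderiv p) ((poly p ^^ n) x)"
  by (simp add: Dd_def)

lemma DERIV_iter: "DERIV (poly p ^^ n) x :> Dd p n x"
proof (induction n)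
  case 0 then show ?case by (simp add: Dd_def)
next
  case (Suc n)
  have "DERIV (poly p \<circ> (poly p ^^ n)) x :> poly (pderiv p) ((poly p ^^ n) x) * Dd p n x"
    by (rule DERIV_chain[OF _ Suc]) (rule poly_DERIV)
  then show ?case by (simp add: Dd_Suc mult.commute comp_def)
qed

lemma deriv_iter: "deriv (poly p ^^ n) x = Dd p n x"
  by (rule DERIV_imp_deriv[OF DERIV_iter])

lemma funpow_add_apply: "(f ^^ (a + b)) x = (f ^^ b) ((f ^^ a) x)"
  by (metis add.commute comp_apply funpow_add)

lemma Dd_add: "Dd p (a + b) x = Dd p a x * Dd p b ((poly p ^^ a) x)"
proof (induction b)
  case 0 then show ?case by (simp add: Dd_def)
next
  case (Suc b)
  have "Dd p (a + Suc b) x = Dd p (a + b) x * poly (pderiv p) ((poly p ^^ (a + b)) x)"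
    using Dd_Suc[of p "a + b" x] by simp
  also have "(poly p ^^ (a + b)) x = (poly p ^^ b) ((poly p ^^ a) x)"
    by (rule funpow_add_apply)
  finally show ?case using Suc by (simp add: Dd_Suc)
qed

lemma iter_period: assumes "(poly p ^^ m0) 0 = 0" shows "(poly p ^^ (m0 * k)) 0 = 0"
proof (induction k)
  case 0 then show ?case by simp
next
  case (Suc k)
  have "(poly p ^^ (m0 * k + m0)) 0 = (poly p ^^ m0) ((poly p ^^ (m0 * k)) 0)"
    by (rule funpow_add_apply)
  then show ?case using Suc assms by (simp add: add.commute)
qed

lemma Dd_period: assumes "(poly p ^^ m0) 0 = 0" shows "Dd p (m0 * k) 0 = Dd p m0 0 ^ k"
proof (induction k)
  case 0 then show ?case by (simp add: Dd_def)
next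
  case (Suc k)
  have "Dd p (m0 * k + m0) 0 = Dd p (m0 * k) 0 * Dd p m0 0"
    using Dd_add[of p "m0*k" m0 0] iter_period[OF assms, of k] by simp
  then show ?case using Suc by (simp add: add.commute mult.commute)
qed

fun Aseq :: "complex poly \<Rightarrow> complex poly \<Rightarrow> complex \<Rightarrow> nat \<Rightarrow> complex \<Rightarrow> complex \<Rightarrow> complex" where
  "Aseq p q eps 0 z w = z"
| "Aseq p q eps (Suc n) z w = poly (pderiv p) ((poly p ^^ n) 0) * Aseq p q eps n z w + eps * (poly q ^^ n) w"

lemma M_qiter: "M (\<lambda>s z w. (poly q ^^ n) w)"
  by (induction n) (auto simp: M_w M_poly)

lemma M_Aseq: "M (\<lambda>s z w. Aseq p q eps n z w)"
  by (induction n) (auto simp: M_z M_add M_mult M_const M_qiter)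

lemma Aseq_closed: "Aseq p q eps n z w = Dd p n 0 * z
   + eps * (\<Sum>k<n. Dd p (n - k - 1) ((poly p ^^ (k + 1)) 0) * (poly q ^^ k) w)"
proof (induction n)
  case 0 then show ?case by (simp add: Dd_def)
next
  case (Suc n)
  have "(\<Sum>k<n. Dd p (Suc n - k - 1) ((poly p ^^ (k + 1)) 0) * (poly q ^^ k) w)
     = (\<Sum>k<n. poly (pderiv p) ((poly p ^^ n) 0) * (Dd p (n - k - 1) ((poly p ^^ (k + 1)) 0) * (poly q ^^ k) w))"
  proof (rule sum.cong[OF refl])
    fix k assume "k \<in> {..<n}"
    then have k: "Suc n - k - 1 = Suc (n - k - 1)" "k + 1 + (n - k - 1) = n" by auto
    show "Dd p (Suc n - k - 1) ((poly p ^^ (k + 1)) 0) * (poly q ^^ k) w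
      = poly (pderiv p) ((poly p ^^ n) 0) * (Dd p (n - k - 1) ((poly p ^^ (k + 1)) 0) * (poly q ^^ k) w)"
      unfolding k(1) Dd_Suc using funpow_add_apply[where f="poly p" and a="k+1" and b="n-k-1" and x=0] k(2)
      by (simp add: algebra_simps)
  qed
  then show ?case using Suc by (simp add: Dd_Suc sum_distrib_left Dd_def[of p 0] algebra_simps)
qed

lemma fmap_apply: "fmap p q eps s (a, b) = (poly p a + s * eps * b, poly q b)"
  by (simp add: fmap_def)

lemma iter_pair: "(fmap p q eps s ^^ Suc n) xy = fmap p q eps s (fst ((fmap p q eps s ^^ n) xy), snd ((fmap p q eps s ^^ n) xy))"
  by simp

lemma snd_iter: "snd ((fmap p q eps s ^^ n) (x, y)) = (poly q ^^ n) y"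
proof (induction n)
  case 0 then show ?case by simp
next
  case (Suc n)
  show ?case unfolding iter_pair fmap_apply using Suc by simp
qed

lemma fst_iter_Suc: "fst ((fmap p q eps s ^^ Suc n) (x, y))
   = poly p (fst ((fmap p q eps s ^^ n) (x, y))) + s * eps * (poly q ^^ n) y"
  unfolding iter_pair fmap_apply snd_iter by simp

lemma main_expansion: "\<exists>R. M R \<and> (\<forall>s z w. fst ((fmap p q eps s ^^ n) (s * z, w))
   = (poly p ^^ n) 0 + s * Aseq p q eps n z w + s^2 * R s z w)"
proof (induction n)
  case 0 show ?case by (rule exI[of _ "\<lambda>s z w. 0"]) (simp add: M_const)
next
  case (Suc n)
  then obtain R where MR: "M R" and R: "\<And>s z w. fst ((fmap p q eps s ^^ n) (s * z, w))
   = (poly p ^^ n) 0 + s * Aseq p q eps n z w + s^2 * R s z w" by auto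
  define a where "a = (poly p ^^ n) 0"
  obtain r where r: "\<And>h. poly p (a + h) = poly p a + poly (pderiv p) a * h + h^2 * poly r h"
    using taylor1 by blast
  define R' where "R' = (\<lambda>s z w. poly (pderiv p) a * R s z w + (Aseq p q eps n z w + s * R s z w)^2 *
       poly r (s * Aseq p q eps n z w + s^2 * R s z w))"
  have "M R'" unfolding R'_def power2_eq_square
    by (intro M_add M_mult M_const M_poly MR M_Aseq M_s)
  moreover have "fst ((fmap p q eps s ^^ Suc n) (s * z, w))
   = (poly p ^^ Suc n) 0 + s * Aseq p q eps (Suc n) z w + s^2 * R' s z w" for s z w
  proof -
    have "fst ((fmap p q eps s ^^ Suc n) (s * z, w)) = poly p (a + (s * Aseq p q eps n z w + s^2 * R s z w))
       + s * eps * (poly q ^^ n) w"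
      by (simp only: fst_iter_Suc R a_def add.assoc)
    also have "\<dots> = (poly p ^^ Suc n) 0 + s * Aseq p q eps (Suc n) z w + s^2 * R' s z w"
      unfolding r R'_def by (simp add: a_def power2_eq_square algebra_simps)
    finally show ?thesis .
  qed
  ultimately show ?case by blast
qed



lemma sum_regroup:
  assumes per: "(poly p ^^ m0) 0 = 0" and m1: "m1 = m0 * t0"
  shows "(\<Sum>n<m1 * l. Dd p (m1 * l - n - 1) ((poly p ^^ (n + 1)) 0) * (poly q ^^ n) w)
    = (\<Sum>i<m1. Dd p (m1 - i - 1) ((poly p ^^ (i + 1)) 0)
         * (\<Sum>k<l. (Dd p m0 0) ^ (t0 * k) * (poly q ^^ (i + (l - 1 - k) * m1)) w))"
proof -
  define f where "f n = Dd p (m1 * l - n - 1) ((poly p ^^ (n + 1)) 0) * (poly q ^^ n) w" for n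
  define b where "b i = Dd p (m1 - i - 1) ((poly p ^^ (i + 1)) 0)" for i
  define rho where "rho = Dd p m0 0"
  have per1: "(poly p ^^ (k * m1)) 0 = 0" for k
    using iter_period[OF per, of "t0 * k"] by (simp add: m1 mult.commute mult.left_commute)
  have Dper: "Dd p (k * m1) 0 = rho ^ (t0 * k)" for k
    using Dd_period[OF per, of "t0 * k"] by (simp add: m1 rho_def mult.commute mult.left_commute)
  have key: "f (i + j * m1) = b i * (rho ^ (t0 * (l - 1 - j)) * (poly q ^^ (i + j * m1)) w)"
    if i: "i < m1" and j: "j < l" for i j
  proof -
    define r where "r = l - 1 - j"
    have lr: "l = j + 1 + r" using j r_def by simp
    have e1: "m1 * l - (i + j * m1) - 1 = (m1 - i - 1) + r * m1"
      unfolding lr using i by (simp add: algebra_simps)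
    have e2: "(poly p ^^ (i + j * m1 + 1)) 0 = (poly p ^^ (i + 1)) 0"
      using funpow_add_apply[where f="poly p" and a="j * m1" and b="i+1" and x=0] per1[of j]
      by (simp add: add.commute add.left_commute)
    have e3: "(poly p ^^ (m1 - i - 1)) ((poly p ^^ (i + 1)) 0) = 0"
      using funpow_add_apply[where f="poly p" and a="i+1" and b="m1 - i - 1" and x=0] per1[of 1] i
      by simp
    have "f (i + j * m1) = Dd p ((m1 - i - 1) + r * m1) ((poly p ^^ (i + 1)) 0) * (poly q ^^ (i + j * m1)) w"
      unfolding f_def e1 e2 ..
    also have "\<dots> = b i * rho ^ (t0 * r) * (poly q ^^ (i + j * m1)) w"
      unfolding Dd_add e3 Dper b_def ..
    finally show ?thesis by (simp add: r_def)
  qed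
  have "(\<Sum>n<m1 * l. f n) = (\<Sum>j<l. \<Sum>n\<in>{j * m1..<j * m1 + m1}. f n)"
    using sum.nat_group[of "\<lambda>n. f n" m1 l] by (simp add: mult.commute)
  also have "\<dots> = (\<Sum>j<l. \<Sum>i<m1. f (i + j * m1))"
  proof (rule sum.cong[OF refl])
    fix j
    show "(\<Sum>n\<in>{j * m1..<j * m1 + m1}. f n) = (\<Sum>i<m1. f (i + j * m1))"
      using sum.shift_bounds_nat_ivl[of f 0 "j * m1" m1] by (simp add: atLeast0LessThan add.commute)
  qed
  also have "\<dots> = (\<Sum>j<l. \<Sum>i<m1. b i * (rho ^ (t0 * (l - 1 - j)) * (poly q ^^ (i + j * m1)) w))"
    by (intro sum.cong refl) (simp add: key)
  also have "\<dots> = (\<Sum>i<m1. b i * (\<Sum>j<l. rho ^ (t0 * (l - 1 - j)) * (poly q ^^ (i + j * m1)) w))"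
    by (subst sum.swap) (simp add: sum_distrib_left)
  also have "\<dots> = (\<Sum>i<m1. b i * (\<Sum>k<l. rho ^ (t0 * k) * (poly q ^^ (i + (l - 1 - k) * m1)) w))"
  proof (rule sum.cong[OF refl])
    fix i
    have "(\<Sum>j<l. rho ^ (t0 * (l - 1 - j)) * (poly q ^^ (i + j * m1)) w)
       = (\<Sum>k<l. rho ^ (t0 * (l - 1 - (l - Suc k))) * (poly q ^^ (i + (l - Suc k) * m1)) w)"
      by (rule sum.nat_diff_reindex[symmetric])
    also have "\<dots> = (\<Sum>k<l. rho ^ (t0 * k) * (poly q ^^ (i + (l - 1 - k) * m1)) w)"
      by (intro sum.cong refl) (auto simp: Suc_diff_Suc)
    finally show "b i * (\<Sum>j<l. rho ^ (t0 * (l - 1 - j)) * (poly q ^^ (i + j * m1)) w)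
      = b i * (\<Sum>k<l. rho ^ (t0 * k) * (poly q ^^ (i + (l - 1 - k) * m1)) w)" by simp
  qed
  finally show ?thesis unfolding f_def b_def rho_def .
qed

lemma gmap_iter:
  assumes "s \<noteq> 0"
  shows "(gmap p q eps s ^^ n) x = phi_inv s ((fmap p q eps s ^^ n) (phi s x))"
proof (induction n)
  case 0 then show ?case using assms by (cases x) (simp add: phi_def phi_inv_def)
next
  case (Suc n)
  have pp: "phi s (phi_inv s y) = y" for y using assms by (cases y) (simp add: phi_def phi_inv_def)
  show ?case using Suc by (simp add: gmap_def pp)
qed



theorem proposition4p2:
  fixes p q :: "complex poly" and m0 t0 :: nat and eps :: complex
  assumes "degree p \<ge> 2"
    and "m0 \<ge> 1"
    and "(poly p ^^ m0) 0 = 0"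
    and "\<And>j. 0 < j \<Longrightarrow> j < m0 \<Longrightarrow> (poly p ^^ j) 0 \<noteq> 0"
    and "t0 \<ge> 1"
    and "eps \<noteq> 0"
  shows "\<forall>l::nat. l \<ge> 1 \<longrightarrow>
    (\<exists>E. poly3 E \<and>
      (\<forall>s z w. s \<noteq> 0 \<and> norm s < 1 \<longrightarrow>
        (gmap p q eps s ^^ (m0 * t0 * l)) (z, w) =
          ((deriv (poly p ^^ m0) 0) ^ (t0 * l) * z
             + eps * (\<Sum>i<m0 * t0.
                 deriv (poly p ^^ (m0 * t0 - i - 1)) ((poly p ^^ (i + 1)) 0)
                 * (\<Sum>k<l. (deriv (poly p ^^ m0) 0) ^ (t0 * k)
                     * (poly q ^^ (i + (l - 1 - k) * (m0 * t0))) w))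
             + s * E s z w,
           (poly q ^^ (m0 * t0 * l)) w)))"
proof (intro allI impI)
  fix l :: nat assume "l \<ge> 1"
  define N where "N = m0 * t0 * l"
  obtain R where MR: "M R" and R: "\<And>s z w. fst ((fmap p q eps s ^^ N) (s * z, w))
   = (poly p ^^ N) 0 + s * Aseq p q eps N z w + s^2 * R s z w"
    using main_expansion by blast
  have pN: "(poly p ^^ N) 0 = 0"
    using iter_period[OF assms(3), of "t0 * l"] by (simp add: N_def mult.assoc)
  have DN: "Dd p N 0 = Dd p m0 0 ^ (t0 * l)"
    using Dd_period[OF assms(3), of "t0 * l"] by (simp add: N_def mult.assoc)
  have A: "Aseq p q eps N z w = Dd p m0 0 ^ (t0 * l) * z
             + eps * (\<Sum>i<m0 * t0.
                 Dd p (m0 * t0 - i - 1) ((poly p ^^ (i + 1)) 0)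
                 * (\<Sum>k<l. (Dd p m0 0) ^ (t0 * k)
                     * (poly q ^^ (i + (l - 1 - k) * (m0 * t0))) w))" for z w
    unfolding Aseq_closed DN
    using sum_regroup[OF assms(3), of "m0 * t0" t0 l q w] by (simp add: N_def)
  show "\<exists>E. poly3 E \<and>
      (\<forall>s z w. s \<noteq> 0 \<and> norm s < 1 \<longrightarrow>
        (gmap p q eps s ^^ (m0 * t0 * l)) (z, w) =
          ((deriv (poly p ^^ m0) 0) ^ (t0 * l) * z
             + eps * (\<Sum>i<m0 * t0.
                 deriv (poly p ^^ (m0 * t0 - i - 1)) ((poly p ^^ (i + 1)) 0)
                 * (\<Sum>k<l. (deriv (poly p ^^ m0) 0) ^ (t0 * k)
                     * (poly q ^^ (i + (l - 1 - k) * (m0 * t0))) w))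
             + s * E s z w,
           (poly q ^^ (m0 * t0 * l)) w))"
  proof (intro exI conjI allI impI)
    show "poly3 R" using MR by (rule M_poly3)
    fix s z w :: complex assume s: "s \<noteq> 0 \<and> norm s < 1"
    have g: "(gmap p q eps s ^^ N) (z, w) = phi_inv s ((fmap p q eps s ^^ N) (s * z, w))"
      using gmap_iter[where s=s and p=p and q=q and eps=eps and n=N and x="(z, w)"] s by (simp add: phi_def)
    also have "\<dots> = (fst ((fmap p q eps s ^^ N) (s * z, w)) / s, snd ((fmap p q eps s ^^ N) (s * z, w)))"
      by (simp add: phi_inv_def case_prod_beta)
    also have "\<dots> = (Aseq p q eps N z w + s * R s z w, (poly q ^^ N) w)"
      unfolding R pN snd_iter using s by (simp add: power2_eq_square field_simps)
    finally show "(gmap p q eps s ^^ (m0 * t0 * l)) (z, w) =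
          ((deriv (poly p ^^ m0) 0) ^ (t0 * l) * z
             + eps * (\<Sum>i<m0 * t0.
                 deriv (poly p ^^ (m0 * t0 - i - 1)) ((poly p ^^ (i + 1)) 0)
                 * (\<Sum>k<l. (deriv (poly p ^^ m0) 0) ^ (t0 * k)
                     * (poly q ^^ (i + (l - 1 - k) * (m0 * t0))) w))
             + s * R s z w,
           (poly q ^^ (m0 * t0 * l)) w)"
      using A[of z w] unfolding deriv_iter N_def by simp
  qed
qed


end
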